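(* For every finite graph $G$: (1) $\mathsf{cdeg}(G) \leq \widetilde{\omega}(G)\cdot(\mathsf{cideg}(G)-1)$; (2) $\widetilde{\omega}(G) \leq 2^{\mathsf{cdeg}(G)}$; (3) $\mathsf{cideg}(G) \leq \mathsf{cdeg}(G)+1$.
   Context: Two vertices of $G$ are equivalent if they lie in exactly the same maximal cliques of $G$. $\widetilde{\omega}(G)$ is the maximum over maximal cliques $K$ of the number of equivalence classes meeting $K$; $\mathsf{cideg}(G)$ is the maximum over vertices $v$ of the number of maximal cliques containing $v$; $\mathsf{cdeg}(G)$ (clique-degree) is the maximum degree of the graph whose vertices are the maximal cliques of $G$, two distinct maximal cliques adjacent iff they intersect. *)

theory Defs
  imports Main
begin

definition is_clique :: "'a set \<Rightarrow> ('a \<Rightarrow> 'a \<Rightarrow> bool) \<Rightarrow> 'a set \<Rightarrow> bool" where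
  "is_clique V E K \<longleftrightarrow> K \<subseteq> V \<and> (\<forall>x\<in>K. \<forall>y\<in>K. x \<noteq> y \<longrightarrow> E x y)"

definition is_max_clique :: "'a set \<Rightarrow> ('a \<Rightarrow> 'a \<Rightarrow> bool) \<Rightarrow> 'a set \<Rightarrow> bool" where
  "is_max_clique V E K \<longleftrightarrow> is_clique V E K \<and> (\<forall>K'. is_clique V E K' \<and> K \<subseteq> K' \<longrightarrow> K' = K)"

definition max_cliques :: "'a set \<Rightarrow> ('a \<Rightarrow> 'a \<Rightarrow> bool) \<Rightarrow> 'a set set" where
  "max_cliques V E = {K. is_max_clique V E K}"

definition cliques_at :: "'a set \<Rightarrow> ('a \<Rightarrow> 'a \<Rightarrow> bool) \<Rightarrow> 'a \<Rightarrow> 'a set set" where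
  "cliques_at V E v = {K \<in> max_cliques V E. v \<in> K}"

definition clique_classes :: "'a set \<Rightarrow> ('a \<Rightarrow> 'a \<Rightarrow> bool) \<Rightarrow> 'a set set" where
  "clique_classes V E = (\<lambda>v. {w \<in> V. cliques_at V E w = cliques_at V E v}) ` V"

text \<open>Maxima over possibly empty sets are taken to be 0.\<close>
definition omega_tilde :: "'a set \<Rightarrow> ('a \<Rightarrow> 'a \<Rightarrow> bool) \<Rightarrow> nat" where
  "omega_tilde V E = Max (insert 0
     ((\<lambda>K. card {C \<in> clique_classes V E. C \<inter> K \<noteq> {}}) ` max_cliques V E))"

definition cideg :: "'a set \<Rightarrow> ('a \<Rightarrow> 'a \<Rightarrow> bool) \<Rightarrow> nat" where
  "cideg V E = Max (insert 0 ((\<lambda>v. card (cliques_at V E v)) ` V))"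

definition cdeg :: "'a set \<Rightarrow> ('a \<Rightarrow> 'a \<Rightarrow> bool) \<Rightarrow> nat" where
  "cdeg V E = Max (insert 0
     ((\<lambda>K. card {K' \<in> max_cliques V E. K' \<noteq> K \<and> K \<inter> K' \<noteq> {}}) ` max_cliques V E))"

end

theory Submission
  imports Defs
begin

lemma mc_sub: "K \<in> max_cliques V E \<Longrightarrow> K \<subseteq> V"
  by (simp add: max_cliques_def is_max_clique_def is_clique_def)

lemma mc_fin: "finite V \<Longrightarrow> finite (max_cliques V E)"
  by (rule finite_subset[of _ "Pow V"]) (auto dest: mc_sub)

lemma max_cases:
  assumes "finite A"
  shows "Max (insert (0::nat) (f ` A)) = 0 \<or> (\<exists>x\<in>A. Max (insert 0 (f ` A)) = f x)"
proof -
  have "Max (insert (0::nat) (f ` A)) \<in> insert 0 (f ` A)"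
    using assms by (intro Max_in) auto
  then show ?thesis by auto
qed

lemma max_ge:
  assumes "finite A" "x \<in> A"
  shows "f x \<le> Max (insert (0::nat) (f ` A))"
  using assms by (intro Max_ge) auto

theorem lemma5p3:
  fixes V :: "'a set" and E :: "'a \<Rightarrow> 'a \<Rightarrow> bool"
  assumes "finite V"
    and "\<And>x y. E x y \<Longrightarrow> x \<in> V \<and> y \<in> V"
    and "\<And>x y. E x y \<Longrightarrow> E y x"
    and "\<And>x. \<not> E x x"
  shows "cdeg V E \<le> omega_tilde V E * (cideg V E - 1) \<and>
         omega_tilde V E \<le> 2 ^ cdeg V E \<and>
         cideg V E \<le> cdeg V E + 1"
proof -
  define MC where "MC = max_cliques V E"
  define ca where "ca = cliques_at V E"
  define CL where "CL = clique_classes V E"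
  define N where "N = (\<lambda>K::'a set. {K' \<in> MC. K' \<noteq> K \<and> K \<inter> K' \<noteq> {}})"
  define Cl where "Cl = (\<lambda>K::'a set. {C \<in> CL. C \<inter> K \<noteq> {}})"
  define rep where "rep = (\<lambda>(K::'a set) (C::'a set). SOME v. v \<in> C \<inter> K)"
  have finMC: "finite MC" using mc_fin[OF assms(1)] MC_def by simp
  have finN: "finite (N K)" for K using finMC N_def by simp
  have finCL: "finite CL" using assms(1) by (simp add: CL_def clique_classes_def)
  have finCl: "finite (Cl K)" for K using finCL Cl_def by simp
  have finca: "finite (ca v)" for v using finMC by (simp add: ca_def cliques_at_def MC_def)
  have cdeg_eq: "cdeg V E = Max (insert 0 ((\<lambda>K. card (N K)) ` MC))"
    by (simp add: cdeg_def N_def MC_def)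
  have om_eq: "omega_tilde V E = Max (insert 0 ((\<lambda>K. card (Cl K)) ` MC))"
    by (simp add: omega_tilde_def Cl_def CL_def MC_def)
  have cid_eq: "cideg V E = Max (insert 0 ((\<lambda>v. card (ca v)) ` V))"
    by (simp add: cideg_def ca_def)
  have cdeg_ge: "K \<in> MC \<Longrightarrow> card (N K) \<le> cdeg V E" for K
    unfolding cdeg_eq by (rule max_ge[OF finMC])
  have om_ge: "K \<in> MC \<Longrightarrow> card (Cl K) \<le> omega_tilde V E" for K
    unfolding om_eq by (rule max_ge[OF finMC])
  have cid_ge: "v \<in> V \<Longrightarrow> card (ca v) \<le> cideg V E" for v
    unfolding cid_eq by (rule max_ge[OF assms(1)])
  have repK: "C \<in> Cl K \<Longrightarrow> rep K C \<in> C \<and> rep K C \<in> K" for C K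
  proof -
    assume "C \<in> Cl K"
    then have "\<exists>v. v \<in> C \<inter> K" by (auto simp: Cl_def)
    then have "(SOME v. v \<in> C \<inter> K) \<in> C \<inter> K" by (rule someI_ex)
    then show ?thesis by (simp add: rep_def)
  qed
  have CLform: "C \<in> CL \<Longrightarrow> \<exists>x\<in>V. C = {w \<in> V. ca w = ca x}" for C
    by (auto simp: CL_def clique_classes_def ca_def)
  have repca: "C \<in> Cl K \<Longrightarrow> x \<in> C \<Longrightarrow> ca (rep K C) = ca x \<and> rep K C \<in> V" for C K x
  proof -
    assume a: "C \<in> Cl K" "x \<in> C"
    have "C \<in> CL" using a(1) Cl_def by simp
    then obtain y where "y \<in> V" "C = {w \<in> V. ca w = ca y}" using CLform by blast
    then show ?thesis using repK[OF a(1)] a(2) by auto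
  qed
  have KinCa: "K \<in> MC \<Longrightarrow> C \<in> Cl K \<Longrightarrow> K \<in> ca (rep K C)" for K C
    using repK by (auto simp: ca_def cliques_at_def MC_def)
  have p1: "cdeg V E \<le> omega_tilde V E * (cideg V E - 1)"
  proof (cases "cdeg V E = 0")
    case True then show ?thesis by simp
  next
    case False
    then obtain K where K: "K \<in> MC" "cdeg V E = card (N K)"
      using max_cases[OF finMC, of "\<lambda>K. card (N K)"] cdeg_eq by auto
    have cov: "N K \<subseteq> (\<Union>C\<in>Cl K. ca (rep K C) - {K})"
    proof
      fix K' assume "K' \<in> N K"
      then have K': "K' \<in> MC" "K' \<noteq> K" "K \<inter> K' \<noteq> {}" by (auto simp: N_def)
      then obtain x where x: "x \<in> K" "x \<in> K'" by auto
      have xV: "x \<in> V" using mc_sub K(1) x(1) MC_def by auto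
      define C where "C = {w \<in> V. ca w = ca x}"
      have "C \<in> CL" using xV by (auto simp: C_def CL_def clique_classes_def ca_def)
      moreover have "x \<in> C" using xV C_def by auto
      ultimately have CC: "C \<in> Cl K" using x Cl_def by auto
      have "ca (rep K C) = ca x" using repca[OF CC \<open>x \<in> C\<close>] by simp
      moreover have "K' \<in> ca x" using K' x by (auto simp: ca_def cliques_at_def MC_def)
      ultimately show "K' \<in> (\<Union>C\<in>Cl K. ca (rep K C) - {K})" using CC K'(2) by auto
    qed
    have "card (N K) \<le> card (\<Union>C\<in>Cl K. ca (rep K C) - {K})"
      by (rule card_mono[OF _ cov]) (use finCl finca in auto)
    also have "\<dots> \<le> (\<Sum>C\<in>Cl K. card (ca (rep K C) - {K}))"
      by (rule card_UN_le[OF finCl])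
    also have "\<dots> \<le> (\<Sum>C\<in>Cl K. cideg V E - 1)"
    proof (rule sum_mono)
      fix C assume C: "C \<in> Cl K"
      have "card (ca (rep K C) - {K}) = card (ca (rep K C)) - 1"
        using KinCa[OF K(1) C] finca by simp
      also have "\<dots> \<le> cideg V E - 1"
        using cid_ge repca[OF C] repK[OF C] by (meson diff_le_mono)
      finally show "card (ca (rep K C) - {K}) \<le> cideg V E - 1" .
    qed
    also have "\<dots> = card (Cl K) * (cideg V E - 1)" by simp
    also have "\<dots> \<le> omega_tilde V E * (cideg V E - 1)"
      using om_ge[OF K(1)] by simp
    finally show ?thesis using K(2) by simp
  qed
  have p2: "omega_tilde V E \<le> 2 ^ cdeg V E"
  proof (cases "omega_tilde V E = 0")
    case True then show ?thesis by simp
  next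
    case False
    then obtain K where K: "K \<in> MC" "omega_tilde V E = card (Cl K)"
      using max_cases[OF finMC, of "\<lambda>K. card (Cl K)"] om_eq by auto
    define g where "g = (\<lambda>C. ca (rep K C) - {K})"
    have inj: "inj_on g (Cl K)"
    proof (rule inj_onI)
      fix C1 C2 assume c: "C1 \<in> Cl K" "C2 \<in> Cl K" "g C1 = g C2"
      have "ca (rep K C1) = ca (rep K C2)"
        using c KinCa[OF K(1) c(1)] KinCa[OF K(1) c(2)] unfolding g_def by blast
      moreover obtain y1 where y1: "y1 \<in> V" "C1 = {w \<in> V. ca w = ca y1}"
        using CLform[of C1] c(1) unfolding Cl_def by blast
      moreover obtain y2 where y2: "y2 \<in> V" "C2 = {w \<in> V. ca w = ca y2}"
        using CLform[of C2] c(2) unfolding Cl_def by blast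
      moreover have "ca (rep K C1) = ca y1" using repK[OF c(1)] y1 by auto
      moreover have "ca (rep K C2) = ca y2" using repK[OF c(2)] y2 by auto
      ultimately show "C1 = C2" by simp
    qed
    have img: "g ` Cl K \<subseteq> Pow (N K)"
    proof
      fix S assume "S \<in> g ` Cl K"
      then obtain C where C: "C \<in> Cl K" "S = g C" by auto
      have r: "rep K C \<in> K" using repK[OF C(1)] by simp
      show "S \<in> Pow (N K)"
        using C r by (auto simp: g_def ca_def cliques_at_def N_def MC_def)
    qed
    have "card (Cl K) \<le> card (Pow (N K))"
      by (rule card_inj_on_le[OF inj img]) (simp add: finN)
    also have "\<dots> = 2 ^ card (N K)" by (simp add: card_Pow finN)
    also have "\<dots> \<le> 2 ^ cdeg V E" using cdeg_ge[OF K(1)] by (simp add: power_increasing)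
    finally show ?thesis using K(2) by simp
  qed
  have p3: "cideg V E \<le> cdeg V E + 1"
  proof (cases "cideg V E = 0")
    case True then show ?thesis by simp
  next
    case False
    then obtain v where v: "v \<in> V" "cideg V E = card (ca v)"
      using max_cases[OF assms(1), of "\<lambda>v. card (ca v)"] cid_eq by auto
    show ?thesis
    proof (cases "ca v = {}")
      case True then show ?thesis using v by simp
    next
      case False
      then obtain K where K: "K \<in> ca v" by auto
      have KM: "K \<in> MC" using K by (simp add: ca_def cliques_at_def MC_def)
      have "ca v \<subseteq> insert K (N K)"
        using K by (auto simp: ca_def cliques_at_def N_def MC_def)
      then have "card (ca v) \<le> card (insert K (N K))" by (intro card_mono) (simp_all add: finN)
      also have "\<dots> \<le> card (N K) + 1" by (simp add: card_insert_le_m1 finN card_insert_if)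
      also have "\<dots> \<le> cdeg V E + 1" using cdeg_ge[OF KM] by simp
      finally show ?thesis using v by simp
    qed
  qed
  show ?thesis using p1 p2 p3 by simp
qed

end
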